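(* Let $K$ be a field, $S=K[x_1,\dots,x_n]$, $M$ a finitely generated graded $S$-module, ${\bf f}=f_1,\dots,f_m$ a sequence of homogeneous polynomials, $I=({\bf f})$, and $g_1,\dots,g_v\in I$ homogeneous; set ${\bf g}=g_1,\dots,g_v$. Then for every $i$, $$\operatorname{reg} Z_i({\bf f},M)\leq \operatorname{reg} Z_i({\bf f},{\bf g},M).$$
   Context: For a sequence ${\bf h}=h_1,\dots,h_r$ of homogeneous polynomials (not necessarily a minimal generating set of the ideal it generates), $K({\bf h},M)$ denotes the Koszul complex $\bigwedge^\bullet G\otimes_S M$, where $G=\bigoplus_{j=1}^r S(-\deg h_j)$ with basis $e_j$ of degree $\deg h_j$ and differential induced by $e_j\mapsto h_j$ (degree $0$); $Z_i({\bf h},M)$ is its graded module of cycles in homological position $i$. $({\bf f},{\bf g})$ denotes the concatenated sequence $f_1,\dots,f_m,g_1,\dots,g_v$. $\operatorname{reg}$ denotes Castelnuovo–Mumford regularity ($-\infty$ for the zero module). *)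

theory Defs
  imports Complex_Main "HOL-Library.Poly_Mapping" "HOL-Library.Function_Algebras"
          "HOL-Library.Extended_Real"
begin

text \<open>Polynomials with coefficients in 'k: finitely supported maps from monomials
  (exponent vectors, themselves finitely supported maps nat => nat) to coefficients.\<close>
type_synonym 'k mpoly = "(nat \<Rightarrow>\<^sub>0 nat) \<Rightarrow>\<^sub>0 'k"

definition mdeg :: "(nat \<Rightarrow>\<^sub>0 nat) \<Rightarrow> nat" where
  "mdeg m = (\<Sum>i\<in>Poly_Mapping.keys m. Poly_Mapping.lookup m i)"

definition polys_in :: "nat \<Rightarrow> 'k::zero mpoly set" where
  "polys_in n = {p. \<forall>m\<in>Poly_Mapping.keys p. Poly_Mapping.keys m \<subseteq> {..<n}}"

definition var :: "nat \<Rightarrow> 'k::{zero,one} mpoly" where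
  "var i = Poly_Mapping.single (Poly_Mapping.single i 1) 1"

definition homog_of :: "nat \<Rightarrow> 'k::zero mpoly \<Rightarrow> bool" where
  "homog_of d p \<longleftrightarrow> (\<forall>m\<in>Poly_Mapping.keys p. mdeg m = d)"

definition is_homog :: "'k::zero mpoly \<Rightarrow> bool" where
  "is_homog p \<longleftrightarrow> (\<exists>d. homog_of d p)"

text \<open>Degree of a homogeneous polynomial (convention: 0 for the zero polynomial).\<close>
definition hdeg :: "'k::zero mpoly \<Rightarrow> nat" where
  "hdeg p = (if p = 0 then 0 else mdeg (SOME m. m \<in> Poly_Mapping.keys p))"

definition in_ideal :: "nat \<Rightarrow> 'k::comm_ring_1 mpoly set \<Rightarrow> 'k mpoly \<Rightarrow> bool" where
  "in_ideal n F p \<longleftrightarrow> (\<exists>c. (\<forall>q\<in>F. c q \<in> polys_in n) \<and> p = (\<Sum>q\<in>F. c q * q))"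

text \<open>A graded module is given inside an ambient abelian group 'm by its carrier,
  the scalar action of polynomials, and its homogeneous components (indexed by int).\<close>
record ('p, 'm) gmod =
  carr :: "'m set"
  act :: "'p \<Rightarrow> 'm \<Rightarrow> 'm"
  comp :: "int \<Rightarrow> 'm set"

definition subgrp :: "'m::ab_group_add set \<Rightarrow> bool" where
  "subgrp A \<longleftrightarrow> 0 \<in> A \<and> (\<forall>u\<in>A. \<forall>v\<in>A. u + v \<in> A) \<and> (\<forall>u\<in>A. - u \<in> A)"

definition graded_module :: "nat \<Rightarrow> ('k::field mpoly, 'm::ab_group_add) gmod \<Rightarrow> bool" where
  "graded_module n M \<longleftrightarrow>
     subgrp (carr M)
   \<and> (\<forall>p\<in>polys_in n. \<forall>u\<in>carr M. act M p u \<in> carr M)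
   \<and> (\<forall>p\<in>polys_in n. \<forall>q\<in>polys_in n. \<forall>u\<in>carr M.
        act M (p + q) u = act M p u + act M q u \<and> act M (p * q) u = act M p (act M q u))
   \<and> (\<forall>p\<in>polys_in n. \<forall>u\<in>carr M. \<forall>v\<in>carr M. act M p (u + v) = act M p u + act M p v)
   \<and> (\<forall>u\<in>carr M. act M 1 u = u)
   \<and> (\<forall>d. subgrp (comp M d) \<and> comp M d \<subseteq> carr M)
   \<and> (\<forall>p\<in>polys_in n. \<forall>e d u. homog_of e p \<longrightarrow> u \<in> comp M d \<longrightarrow> act M p u \<in> comp M (d + int e))
   \<and> (\<forall>u\<in>carr M. \<exists>!c :: int \<Rightarrow> 'm. finite {d. c d \<noteq> 0} \<and> (\<forall>d. c d \<in> comp M d)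
                                      \<and> u = (\<Sum>d\<in>{d. c d \<noteq> 0}. c d))"

definition fin_gen :: "nat \<Rightarrow> ('k::field mpoly, 'm::ab_group_add) gmod \<Rightarrow> bool" where
  "fin_gen n M \<longleftrightarrow> (\<exists>U. finite U \<and> U \<subseteq> carr M \<and>
      carr M = {(\<Sum>u\<in>U. act M (c u) u) | c. \<forall>u\<in>U. c u \<in> polys_in n})"

text \<open>K_i(h,M): an element is a family (phi J) indexed by the i-subsets J of
  {0..<length h}, phi J being the coefficient of e_J; e_J has degree
  sum of deg h_j for j in J.\<close>
definition wdeg :: "'k::zero mpoly list \<Rightarrow> nat set \<Rightarrow> int" where
  "wdeg h J = int (\<Sum>j\<in>J. hdeg (h ! j))"

definition kcarr :: "'k::zero mpoly list \<Rightarrow> ('k mpoly, 'm::zero) gmod \<Rightarrow> nat \<Rightarrow> (nat set \<Rightarrow> 'm) set" where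
  "kcarr h M i = {\<phi>. (\<forall>J. \<phi> J \<in> carr M) \<and>
                     (\<forall>J. \<phi> J \<noteq> 0 \<longrightarrow> J \<subseteq> {..<length h} \<and> card J = i)}"

definition kcomp :: "'k::zero mpoly list \<Rightarrow> ('k mpoly, 'm::zero) gmod \<Rightarrow> nat \<Rightarrow> int \<Rightarrow> (nat set \<Rightarrow> 'm) set" where
  "kcomp h M i d = {\<phi>\<in>kcarr h M i. \<forall>J. \<phi> J \<in> comp M (d - wdeg h J)}"

definition kact :: "('k mpoly, 'm) gmod \<Rightarrow> 'k mpoly \<Rightarrow> (nat set \<Rightarrow> 'm) \<Rightarrow> (nat set \<Rightarrow> 'm)" where
  "kact M p \<phi> = (\<lambda>J. act M p (\<phi> J))"

text \<open>Koszul differential: e_{j_1} ^ ... ^ e_{j_i} |-> sum_k (-1)^(k+1) h_{j_k} e_{J - j_k}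
  (j_1 < ... < j_i).  In coordinates: the coefficient of e_J in d(phi).\<close>
definition kdiff :: "'k mpoly list \<Rightarrow> ('k mpoly, 'm::ab_group_add) gmod \<Rightarrow> (nat set \<Rightarrow> 'm) \<Rightarrow> (nat set \<Rightarrow> 'm)" where
  "kdiff h M \<phi> = (\<lambda>J. \<Sum>j\<in>{..<length h} - J.
      (if even (card {l\<in>J. l < j}) then act M (h ! j) (\<phi> (insert j J))
       else - act M (h ! j) (\<phi> (insert j J))))"

definition koszul :: "'k::zero mpoly list \<Rightarrow> ('k mpoly, 'm::zero) gmod \<Rightarrow> nat \<Rightarrow> ('k mpoly, nat set \<Rightarrow> 'm) gmod" where
  "koszul h M i = \<lparr>carr = kcarr h M i, act = kact M, comp = kcomp h M i\<rparr>"

definition cycles :: "'k::zero mpoly list \<Rightarrow> ('k mpoly, 'm::ab_group_add) gmod \<Rightarrow> nat \<Rightarrow> ('k mpoly, nat set \<Rightarrow> 'm) gmod" where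
  "cycles h M i = \<lparr>carr = {\<phi>\<in>kcarr h M i. kdiff h M \<phi> = 0}, act = kact M,
                  comp = (\<lambda>d. {\<phi>\<in>kcomp h M i d. kdiff h M \<phi> = 0})\<rparr>"

definition vars :: "nat \<Rightarrow> 'k::{zero,one} mpoly list" where
  "vars n = map var [0..<n]"

text \<open>Tor_i^S(N,K)_j = H_i(x_1..x_n; N)_j is nonzero.\<close>
definition tor_nz :: "nat \<Rightarrow> ('k::field mpoly, 'm::ab_group_add) gmod \<Rightarrow> nat \<Rightarrow> int \<Rightarrow> bool" where
  "tor_nz n N i j \<longleftrightarrow> (\<exists>\<phi>\<in>kcomp (vars n) N i j. kdiff (vars n) N \<phi> = 0 \<and>
                          \<phi> \<notin> kdiff (vars n) N ` kcarr (vars n) N (Suc i))"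

text \<open>reg N = sup { j - i : beta_{ij}(N) \<noteq> 0 }, which is -\<infinity> for N = 0.\<close>
definition reg :: "nat \<Rightarrow> ('k::field mpoly, 'm::ab_group_add) gmod \<Rightarrow> ereal" where
  "reg n N = Sup {ereal (of_int (j - int i)) | i j. tor_nz n N i j}"

end

theory Submission
  imports Defs
begin

lemma polys_zero: "0 \<in> polys_in n"
  by (simp add: polys_in_def)

lemma polys_add: assumes "p \<in> polys_in n" "q \<in> polys_in n" shows "p + q \<in> polys_in n"
  unfolding polys_in_def mem_Collect_eq
proof (intro ballI)
  fix m assume "m \<in> Poly_Mapping.keys (p + q)"
  then have "m \<in> Poly_Mapping.keys p \<union> Poly_Mapping.keys q" using keys_add by (rule subsetD[rotated])
  then show "Poly_Mapping.keys m \<subseteq> {..<n}" using assms unfolding polys_in_def by auto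
qed

lemma polys_mult:
  assumes "p \<in> polys_in n" "q \<in> polys_in n" shows "p * q \<in> polys_in n"
  unfolding polys_in_def mem_Collect_eq
proof (intro ballI)
  fix m assume "m \<in> Poly_Mapping.keys (p * q)"
  then have "m \<in> {a + b | a b. a \<in> Poly_Mapping.keys p \<and> b \<in> Poly_Mapping.keys q}"
    using keys_mult by (rule subsetD[rotated])
  then obtain a b where ab: "m = a + b" "a \<in> Poly_Mapping.keys p" "b \<in> Poly_Mapping.keys q"
    by auto
  have pa: "\<forall>m\<in>Poly_Mapping.keys p. Poly_Mapping.keys m \<subseteq> {..<n}"
    using assms(1) by (simp add: polys_in_def)
  have qa: "\<forall>m\<in>Poly_Mapping.keys q. Poly_Mapping.keys m \<subseteq> {..<n}"
    using assms(2) by (simp add: polys_in_def)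
  have ka: "Poly_Mapping.keys a \<subseteq> {..<n}" using pa ab(2) by (rule bspec)
  have kb: "Poly_Mapping.keys b \<subseteq> {..<n}" using qa ab(3) by (rule bspec)
  have "Poly_Mapping.keys m \<subseteq> Poly_Mapping.keys a \<union> Poly_Mapping.keys b"
    unfolding ab(1) by (rule keys_add)
  then show "Poly_Mapping.keys m \<subseteq> {..<n}"
    using ka kb by (rule order_trans[OF _ Un_least])
qed

lemma polys_sum: "(\<And>x. x \<in> A \<Longrightarrow> F x \<in> polys_in n) \<Longrightarrow> sum F A \<in> polys_in n"
  by (induction A rule: infinite_finite_induct) (auto simp: polys_zero polys_add)

lemma polys_var: "k < n \<Longrightarrow> (var k :: 'k::{zero_neq_one} mpoly) \<in> polys_in n"
  by (simp add: polys_in_def var_def)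

definition sg :: "nat \<Rightarrow> 'a::ab_group_add \<Rightarrow> 'a" where
  "sg e x = (if even e then x else - x)"

lemma sg_add: "sg (a + b) x = sg a (sg b x)"
  by (auto simp: sg_def)

lemma sg_plus: "sg e (x + y) = sg e x + sg e y"
  by (auto simp: sg_def)

lemma sg_neg: "sg e (- x) = - sg e x"
  by (auto simp: sg_def)

lemma sg_zero[simp]: "sg e 0 = 0"
  by (auto simp: sg_def)

lemma sg_sum: "sg e (sum F A) = (\<Sum>x\<in>A. sg e (F x))"
  by (auto simp: sg_def sum_negf)

lemma sg_parity: "even (a + b) \<Longrightarrow> sg a x = sg b x"
  by (auto simp: sg_def)

lemma kdiff_sg: "kdiff h M \<phi> = (\<lambda>J. \<Sum>j\<in>{..<length h} - J.
      sg (card {l\<in>J. l < j}) (act M (h ! j) (\<phi> (insert j J))))"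
  by (simp add: kdiff_def sg_def)

context
  fixes n :: nat and M :: "('k::field mpoly, 'm::ab_group_add) gmod"
  assumes gm: "graded_module n M"
begin

lemma sub_carr: "subgrp (carr M)" using gm unfolding graded_module_def by blast

lemma zero_carr: "0 \<in> carr M" using sub_carr unfolding subgrp_def by blast
lemma add_carr: "u \<in> carr M \<Longrightarrow> v \<in> carr M \<Longrightarrow> u + v \<in> carr M"
  using sub_carr unfolding subgrp_def by blast
lemma neg_carr: "u \<in> carr M \<Longrightarrow> - u \<in> carr M"
  using sub_carr unfolding subgrp_def by blast
lemma sg_carr: "u \<in> carr M \<Longrightarrow> sg e u \<in> carr M"
  using neg_carr by (simp add: sg_def)
lemma sum_carr: "(\<And>x. x \<in> A \<Longrightarrow> F x \<in> carr M) \<Longrightarrow> sum F A \<in> carr M"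
  by (induction A rule: infinite_finite_induct) (auto simp: zero_carr add_carr)

lemma act_carr: "p \<in> polys_in n \<Longrightarrow> u \<in> carr M \<Longrightarrow> act M p u \<in> carr M"
  using gm unfolding graded_module_def by blast
lemma act_addL: "p \<in> polys_in n \<Longrightarrow> q \<in> polys_in n \<Longrightarrow> u \<in> carr M \<Longrightarrow>
   act M (p + q) u = act M p u + act M q u"
  using gm unfolding graded_module_def by blast
lemma act_mult: "p \<in> polys_in n \<Longrightarrow> q \<in> polys_in n \<Longrightarrow> u \<in> carr M \<Longrightarrow>
   act M (p * q) u = act M p (act M q u)"
  using gm unfolding graded_module_def by blast
lemma act_addR: "p \<in> polys_in n \<Longrightarrow> u \<in> carr M \<Longrightarrow> v \<in> carr M \<Longrightarrow>
   act M p (u + v) = act M p u + act M p v"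
  using gm unfolding graded_module_def by blast

lemma act_zeroR: "p \<in> polys_in n \<Longrightarrow> act M p 0 = 0"
  using act_addR[of p 0 0] zero_carr by simp

lemma act_negR: "p \<in> polys_in n \<Longrightarrow> u \<in> carr M \<Longrightarrow> act M p (- u) = - act M p u"
proof -
  assume a: "p \<in> polys_in n" "u \<in> carr M"
  have "act M p u + act M p (- u) = 0"
    using act_addR[of p u "-u"] neg_carr act_zeroR a by simp
  then show ?thesis by (simp add: eq_neg_iff_add_eq_0 add.commute)
qed

lemma act_sgR: "p \<in> polys_in n \<Longrightarrow> u \<in> carr M \<Longrightarrow> act M p (sg e u) = sg e (act M p u)"
  by (simp add: sg_def act_negR)

lemma act_zeroL: "u \<in> carr M \<Longrightarrow> act M 0 u = 0"
  using act_addL[of 0 0 u] polys_zero[of n] by simp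

lemma act_sumR: "p \<in> polys_in n \<Longrightarrow> (\<And>x. x \<in> A \<Longrightarrow> F x \<in> carr M) \<Longrightarrow>
   act M p (sum F A) = (\<Sum>x\<in>A. act M p (F x))"
  by (induction A rule: infinite_finite_induct) (auto simp: act_zeroR act_addR sum_carr)

lemma act_sumL: "(\<And>x. x \<in> A \<Longrightarrow> F x \<in> polys_in n) \<Longrightarrow> u \<in> carr M \<Longrightarrow>
   act M (sum F A) u = (\<Sum>x\<in>A. act M (F x) u)"
  by (induction A rule: infinite_finite_induct) (auto simp: act_zeroL act_addL polys_sum)

lemma act_comm: "p \<in> polys_in n \<Longrightarrow> q \<in> polys_in n \<Longrightarrow> u \<in> carr M \<Longrightarrow>
   act M p (act M q u) = act M q (act M p u)"
  by (metis act_mult mult.commute)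

end

section \<open>Transfer of Tor along a retraction\<close>

lemma length_vars[simp]: "length (vars n) = n"
  by (simp add: vars_def)

lemma nth_vars[simp]: "j < n \<Longrightarrow> vars n ! j = var j"
  by (simp add: vars_def)

lemma kcarr_map:
  assumes "\<psi> \<in> kcarr h N' i" "\<And>u. u \<in> carr N' \<Longrightarrow> pr u \<in> carr N" "pr 0 = 0"
  shows "(\<lambda>J. pr (\<psi> J)) \<in> kcarr h N i"
  using assms unfolding kcarr_def mem_Collect_eq by metis

lemma tor_transfer:
  fixes N N' :: "('k::field mpoly, 'a::ab_group_add) gmod" and V :: "'a set" and pr :: "'a \<Rightarrow> 'a"
  assumes carr_sub: "carr N \<subseteq> carr N'" and comp_sub: "\<And>d. comp N d \<subseteq> comp N' d"
    and act_eq: "act N' = act N"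
    and VN': "carr N' \<subseteq> V" and V0: "0 \<in> V" and Vadd: "\<And>u v. u\<in>V \<Longrightarrow> v\<in>V \<Longrightarrow> u+v \<in> V"
    and Vneg: "\<And>u. u\<in>V \<Longrightarrow> -u \<in> V"
    and Vact: "\<And>k u. k<n \<Longrightarrow> u\<in>V \<Longrightarrow> act N (var k) u \<in> V"
    and padd: "\<And>u v. u\<in>V \<Longrightarrow> v\<in>V \<Longrightarrow> pr (u+v) = pr u + pr v"
    and pneg: "\<And>u. u \<in> V \<Longrightarrow> pr (-u) = - pr u"
    and pact: "\<And>k u. k<n \<Longrightarrow> u\<in>V \<Longrightarrow> pr (act N (var k) u) = act N (var k) (pr u)"
    and pcarr: "\<And>u. u\<in>carr N' \<Longrightarrow> pr u \<in> carr N" and pid: "\<And>u. u\<in>carr N \<Longrightarrow> pr u = u"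
    and tz: "tor_nz n N a j"
  shows "tor_nz n N' a j"
proof -
  have p0: "pr 0 = 0" using padd[OF V0 V0] by simp
  have Vsum: "sum F A \<in> V" if "\<And>x. x\<in>A \<Longrightarrow> F x \<in> V" for A :: "nat set" and F
    using that by (induction A rule: infinite_finite_induct) (auto simp: V0 Vadd)
  have psum: "pr (sum F A) = (\<Sum>x\<in>A. pr (F x))" if "\<And>x. x\<in>A \<Longrightarrow> F x \<in> V" for A :: "nat set" and F
    using that
  proof (induction A rule: infinite_finite_induct)
    case (insert x A)
    then show ?case by (simp add: padd Vsum)
  qed (auto simp: p0)
  have kd: "kdiff (vars n) N' = kdiff (vars n) N"
    unfolding kdiff_def act_eq ..
  from tz obtain \<phi> where \<phi>: "\<phi> \<in> kcomp (vars n) N a j" "kdiff (vars n) N \<phi> = 0"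
      "\<phi> \<notin> kdiff (vars n) N ` kcarr (vars n) N (Suc a)"
    unfolding tor_nz_def by blast
  have "\<phi> \<in> kcomp (vars n) N' a j"
    using \<phi>(1) carr_sub comp_sub unfolding kcomp_def kcarr_def by blast
  moreover have "\<phi> \<notin> kdiff (vars n) N' ` kcarr (vars n) N' (Suc a)"
  proof
    assume "\<phi> \<in> kdiff (vars n) N' ` kcarr (vars n) N' (Suc a)"
    then obtain \<psi> where \<psi>: "\<psi> \<in> kcarr (vars n) N' (Suc a)" "\<phi> = kdiff (vars n) N' \<psi>" by blast
    define \<psi>' where "\<psi>' = (\<lambda>J. pr (\<psi> J))"
    have \<psi>V: "\<And>J. \<psi> J \<in> V" using \<psi>(1) VN' unfolding kcarr_def by blast
    have "\<psi>' \<in> kcarr (vars n) N (Suc a)" unfolding \<psi>'_def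
      using \<psi>(1) pcarr p0 by (rule kcarr_map)
    moreover have "kdiff (vars n) N \<psi>' = \<phi>"
    proof
      fix J
      have \<phi>J: "\<phi> J \<in> carr N" using \<phi>(1) unfolding kcomp_def kcarr_def by blast
      have "kdiff (vars n) N \<psi>' J = (\<Sum>j\<in>{..<n} - J. pr (if even (card {l \<in> J. l < j})
           then act N (var j) (\<psi> (insert j J)) else - act N (var j) (\<psi> (insert j J))))"
        unfolding kdiff_def \<psi>'_def by (intro sum.cong) (auto simp: vars_def pact pneg \<psi>V Vact)
      also have "\<dots> = pr (kdiff (vars n) N \<psi> J)"
        unfolding kdiff_def by (subst psum) (auto simp: \<psi>V Vact Vneg intro!: sum.cong)
      also have "\<dots> = pr (\<phi> J)" using \<psi>(2) kd by simp
      finally show "kdiff (vars n) N \<psi>' J = \<phi> J" using pid \<phi>J by simp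
    qed
    ultimately show False using \<phi>(3) by blast
  qed
  ultimately show ?thesis using \<phi>(2) kd unfolding tor_nz_def by auto
qed

lemma reg_mono: "(\<And>a j. tor_nz n N a j \<Longrightarrow> tor_nz n N' a j) \<Longrightarrow> reg n N \<le> reg n N'"
  unfolding reg_def by (rule Sup_subset_mono) blast

lemma ideal_index:
  assumes "in_ideal n (set f) h"
  shows "\<exists>c. (\<forall>l. c l \<in> polys_in n) \<and> h = (\<Sum>l<length f. c l * f ! l)"
  using assms
proof (induction f arbitrary: h)
  case Nil
  then show ?case by (auto simp: in_ideal_def intro!: exI[of _ "\<lambda>_. 0"] polys_zero)
next
  case (Cons a f)
  from Cons.prems obtain c where c: "\<forall>q\<in>set (a#f). c q \<in> polys_in n"
      "h = (\<Sum>q\<in>set (a#f). c q * q)"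
    unfolding in_ideal_def by blast
  show ?case
  proof (cases "a \<in> set f")
    case True
    then have "in_ideal n (set f) h" using Cons.prems by (simp add: insert_absorb)
    then obtain c' where c': "\<forall>l. c' l \<in> polys_in n" "h = (\<Sum>l<length f. c' l * f!l)"
      using Cons.IH by blast
    have "(\<Sum>l<length (a#f). (if l = 0 then 0 else c' (l - 1)) * (a#f) ! l) = (\<Sum>l<length f. c' l * f!l)"
      by (simp only: length_Cons sum.lessThan_Suc_shift) simp
    then show ?thesis
      by (intro exI[of _ "\<lambda>l. if l = 0 then 0 else c' (l - 1)"]) (use c' in \<open>auto simp: polys_zero\<close>)
  next
    case False
    have "in_ideal n (set f) (\<Sum>q\<in>set f. c q * q)" using c(1) unfolding in_ideal_def by auto
    then obtain c' where c': "\<forall>l. c' l \<in> polys_in n" "(\<Sum>q\<in>set f. c q * q) = (\<Sum>l<length f. c' l * f!l)"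
      using Cons.IH by blast
    have hh: "h = c a * a + (\<Sum>q\<in>set f. c q * q)" using c(2) False by simp
    have "(\<Sum>l<length (a#f). (if l = 0 then c a else c' (l - 1)) * (a#f) ! l) = c a * a + (\<Sum>l<length f. c' l * f!l)"
      by (simp only: length_Cons sum.lessThan_Suc_shift) simp
    then show ?thesis
      by (intro exI[of _ "\<lambda>l. if l = 0 then c a else c' (l - 1)"]) (use c' c(1) hh in auto)
  qed
qed

lemma card_split: "finite (J::nat set) \<Longrightarrow> j \<notin> J \<Longrightarrow> card {l\<in>J. l<j} + card {l\<in>J. j<l} = card J"
proof -
  assume fJ: "finite J" and j: "j \<notin> J"
  have "J = {l\<in>J. l<j} \<union> {l\<in>J. j<l}" using j by auto (metis linorder_neqE_nat)
  moreover have "{l\<in>J. l<j} \<inter> {l\<in>J. j<l} = {}" by auto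
  ultimately show ?thesis using fJ card_Un_disjoint[of "{l\<in>J. l<j}" "{l\<in>J. j<l}"]
    by (metis (no_types, lifting) finite_Un)
qed

lemma card_less_remove:
  assumes "finite (J::nat set)" "l \<in> J" "l \<noteq> j"
  shows "card {x\<in>J. x<j} = card {x\<in>J-{l}. x<j} + (if l < j then 1 else 0)"
proof (cases "l < j")
  case True
  then have "{x\<in>J. x<j} = insert l {x\<in>J-{l}. x<j}" using assms by auto
  then show ?thesis using True assms by simp
next
  case False
  then have "{x\<in>J. x<j} = {x\<in>J-{l}. x<j}" using assms by auto
  then show ?thesis using False by simp
qed

lemma card_greater_insert:
  assumes "finite (J::nat set)" "j \<notin> J"
  shows "card {k\<in>insert j J. l<k} = card {k\<in>J. l<k} + (if l < j then 1 else 0)"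
proof (cases "l < j")
  case True
  then have "{k\<in>insert j J. l<k} = insert j {k\<in>J. l<k}" by auto
  then show ?thesis using True assms by simp
next
  case False
  then have "{k\<in>insert j J. l<k} = {k\<in>J. l<k}" by auto
  then show ?thesis using False by simp
qed

section \<open>The retraction\<close>

definition prj :: "('k mpoly, 'm::ab_group_add) gmod \<Rightarrow> nat \<Rightarrow> (nat \<Rightarrow> 'k mpoly) \<Rightarrow> (nat set \<Rightarrow> 'm) \<Rightarrow> nat set \<Rightarrow> 'm" where
  "prj M m c \<phi> = (\<lambda>J. if J \<subseteq> {..<m} then \<phi> J +
      (\<Sum>l\<in>J. sg (card {k\<in>J. l<k}) (act M (c l) (\<phi> (insert m (J - {l}))))) else 0)"

lemma sg_Suc: "sg (Suc e) x = - sg e x"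
  by (simp add: sg_def)

context
  fixes n :: nat and M :: "('k::field mpoly, 'm::ab_group_add) gmod"
    and f :: "'k mpoly list" and h :: "'k mpoly" and c :: "nat \<Rightarrow> 'k mpoly" and \<phi> :: "nat set \<Rightarrow> 'm"
  assumes gm: "graded_module n M" and fpol: "\<forall>p\<in>set f. p \<in> polys_in n" and cpol: "\<forall>l. c l \<in> polys_in n"
    and hdef: "h = (\<Sum>l<length f. c l * f!l)" and phiC: "\<forall>J. \<phi> J \<in> carr M"
    and cyc: "kdiff (f@[h]) M \<phi> = 0"
begin

lemma fj: "j < length f \<Longrightarrow> f!j \<in> polys_in n" using fpol by simp

lemma hpol: "h \<in> polys_in n" unfolding hdef by (intro polys_sum polys_mult) (auto simp: cpol fj)

lemma cycF: "(\<Sum>j\<in>{..<Suc (length f)} - J. sg (card {l\<in>J. l<j}) (act M ((f@[h])!j) (\<phi> (insert j J)))) = 0"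
  using fun_cong[OF cyc, of J] by (simp add: kdiff_sg zero_fun_def)

lemma cyc_at:
  assumes J: "J \<subseteq> {..<length f}"
  shows "sg (card J) (act M h (\<phi> (insert (length f) J))) +
    (\<Sum>j\<in>{..<length f} - J. sg (card {l\<in>J. l<j}) (act M (f!j) (\<phi> (insert j J)))) = 0"
proof -
  let ?m = "length f"
  have e: "{..<Suc ?m} - J = insert ?m ({..<?m} - J)" using J by auto
  have cJ: "{l\<in>J. l < ?m} = J" using J by auto
  have s1: "(\<Sum>j\<in>{..<?m} - J. sg (card {l\<in>J. l<j}) (act M ((f@[h])!j) (\<phi> (insert j J)))) =
     (\<Sum>j\<in>{..<?m} - J. sg (card {l\<in>J. l<j}) (act M (f!j) (\<phi> (insert j J))))"
    by (rule sum.cong) (auto simp: nth_append)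
  have "0 = (\<Sum>j\<in>insert ?m ({..<?m} - J). sg (card {l\<in>J. l<j}) (act M ((f@[h])!j) (\<phi> (insert j J))))"
    using cycF[of J] e by simp
  also have "\<dots> = sg (card {l\<in>J. l<?m}) (act M ((f@[h])!?m) (\<phi> (insert ?m J))) +
      (\<Sum>j\<in>{..<?m} - J. sg (card {l\<in>J. l<j}) (act M ((f@[h])!j) (\<phi> (insert j J))))"
    by (rule sum.insert) auto
  also have "\<dots> = sg (card J) (act M h (\<phi> (insert (length f) J))) +
    (\<Sum>j\<in>{..<length f} - J. sg (card {l\<in>J. l<j}) (act M (f!j) (\<phi> (insert j J))))"
    using s1 cJ by simp
  finally show ?thesis by simp
qed

lemma cyc_at2:
  assumes J: "J \<subseteq> {..<length f}" and l: "l \<in> J"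
  shows "sg (card {x\<in>J-{l}. x<l}) (act M (f!l) (\<phi> (insert (length f) J))) +
    (\<Sum>j\<in>{..<length f} - J. sg (card {x\<in>J-{l}. x<j})
        (act M (f!j) (\<phi> (insert j (insert (length f) (J-{l})))))) = 0"
proof -
  let ?m = "length f"
  let ?K = "insert ?m (J - {l})"
  have e: "{..<Suc ?m} - ?K = insert l ({..<?m} - J)" using J l by auto
  have ck: "\<And>j. j < ?m \<Longrightarrow> {x\<in>?K. x<j} = {x\<in>J-{l}. x<j}" by auto
  have lm: "l < ?m" using J l by auto
  have ins: "insert l ?K = insert ?m J" using l by auto
  have s1: "(\<Sum>j\<in>{..<?m} - J. sg (card {x\<in>?K. x<j}) (act M ((f@[h])!j) (\<phi> (insert j ?K)))) =
     (\<Sum>j\<in>{..<?m} - J. sg (card {x\<in>J-{l}. x<j}) (act M (f!j) (\<phi> (insert j ?K))))"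
  proof (rule sum.cong[OF refl])
    fix j assume "j \<in> {..<?m} - J"
    then have jm: "j < ?m" by auto
    show "sg (card {x\<in>?K. x<j}) (act M ((f@[h])!j) (\<phi> (insert j ?K))) =
      sg (card {x\<in>J-{l}. x<j}) (act M (f!j) (\<phi> (insert j ?K)))"
      by (simp only: ck[OF jm]) (simp add: nth_append jm)
  qed
  have s2: "sg (card {x\<in>?K. x<l}) (act M ((f@[h])!l) (\<phi> (insert l ?K))) =
     sg (card {x\<in>J-{l}. x<l}) (act M (f!l) (\<phi> (insert ?m J)))"
    by (simp only: ck[OF lm] ins) (simp add: nth_append lm)
  have "0 = (\<Sum>j\<in>insert l ({..<?m} - J). sg (card {x\<in>?K. x<j}) (act M ((f@[h])!j) (\<phi> (insert j ?K))))"
    using cycF[of ?K] e by simp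
  also have "\<dots> = sg (card {x\<in>?K. x<l}) (act M ((f@[h])!l) (\<phi> (insert l ?K))) +
      (\<Sum>j\<in>{..<?m} - J. sg (card {x\<in>?K. x<j}) (act M ((f@[h])!j) (\<phi> (insert j ?K))))"
    by (rule sum.insert) (use l in auto)
  also have "\<dots> = sg (card {x\<in>J-{l}. x<l}) (act M (f!l) (\<phi> (insert ?m J))) +
    (\<Sum>j\<in>{..<?m} - J. sg (card {x\<in>J-{l}. x<j}) (act M (f!j) (\<phi> (insert j ?K))))"
    using s1 s2 by simp
  finally show ?thesis by simp
qed

lemma prj_insert:
  assumes J: "J \<subseteq> {..<length f}" and j: "j \<in> {..<length f} - J"
  shows "prj M (length f) c \<phi> (insert j J) = \<phi> (insert j J) +
     (sg (card {k\<in>J. j<k}) (act M (c j) (\<phi> (insert (length f) J))) +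
      (\<Sum>l\<in>J. sg (card {k\<in>insert j J. l<k}) (act M (c l) (\<phi> (insert (length f) (insert j (J - {l})))))))"
proof -
  have fin: "finite J" using J finite_subset by blast
  have sub: "insert j J \<subseteq> {..<length f}" using J j by auto
  have jJ: "j \<notin> J" using j by auto
  have d: "\<And>l. l \<in> J \<Longrightarrow> insert j J - {l} = insert j (J - {l})" using jJ by auto
  have "(\<Sum>l\<in>insert j J. sg (card {k\<in>insert j J. l<k}) (act M (c l) (\<phi> (insert (length f) (insert j J - {l}))))) =
     sg (card {k\<in>insert j J. j<k}) (act M (c j) (\<phi> (insert (length f) (insert j J - {j})))) +
     (\<Sum>l\<in>J. sg (card {k\<in>insert j J. l<k}) (act M (c l) (\<phi> (insert (length f) (insert j J - {l})))))"
    by (rule sum.insert) (use fin jJ in auto)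
  also have "\<dots> = sg (card {k\<in>J. j<k}) (act M (c j) (\<phi> (insert (length f) J))) +
      (\<Sum>l\<in>J. sg (card {k\<in>insert j J. l<k}) (act M (c l) (\<phi> (insert (length f) (insert j (J - {l}))))))"
  proof -
    have "{k\<in>insert j J. j<k} = {k\<in>J. j<k}" by auto
    moreover have "insert j J - {j} = J" using jJ by auto
    moreover have "(\<Sum>l\<in>J. sg (card {k\<in>insert j J. l<k}) (act M (c l) (\<phi> (insert (length f) (insert j J - {l}))))) =
       (\<Sum>l\<in>J. sg (card {k\<in>insert j J. l<k}) (act M (c l) (\<phi> (insert (length f) (insert j (J - {l}))))))"
      by (rule sum.cong) (simp_all add: d)
    ultimately show ?thesis by simp
  qed
  finally show ?thesis using sub unfolding prj_def by simp
qed

lemma prj_cycle: "kdiff f M (prj M (length f) c \<phi>) = 0"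
proof
  fix J
  let ?m = "length f"
  let ?P = "prj M ?m c \<phi>"
  have cp: "\<And>l. c l \<in> polys_in n" using cpol by blast
  show "kdiff f M ?P J = 0 J"
  proof (cases "J \<subseteq> {..<?m}")
    case False
    have "\<forall>j\<in>{..<?m} - J. sg (card {l\<in>J. l<j}) (act M (f!j) (?P (insert j J))) = 0"
      using False by (auto simp: prj_def act_zeroR[OF gm] fj)
    then show ?thesis by (simp add: kdiff_sg zero_fun_def)
  next
    case True
    let ?D = "{..<?m} - J"
    define u where "u = \<phi> (insert ?m J)"
    have fin: "finite J" using True finite_subset by blast
    have uC: "u \<in> carr M" using phiC u_def by simp
    define a where "a j = card {l\<in>J. l<j}" for j
    define B where "B j = sg (card {k\<in>J. j<k}) (act M (c j) u)" for j
    define W where "W j l = \<phi> (insert ?m (insert j (J - {l})))" for j l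
    define Y where "Y j = (\<Sum>l\<in>J. sg (card {k\<in>insert j J. l<k}) (act M (c l) (W j l)))" for j
    have WC: "W j l \<in> carr M" for j l using phiC W_def by simp
    have BC: "B j \<in> carr M" for j unfolding B_def
      by (intro sg_carr[OF gm] act_carr[OF gm] cp uC)
    have YC: "Y j \<in> carr M" for j unfolding Y_def
      by (intro sum_carr[OF gm] sg_carr[OF gm] act_carr[OF gm] cp WC)
    have AC: "\<phi> (insert j J) \<in> carr M" for j using phiC by simp
    have Pins: "?P (insert j J) = \<phi> (insert j J) + (B j + Y j)" if "j \<in> ?D" for j
      using prj_insert[OF True that] unfolding B_def Y_def W_def u_def by simp
    have step1: "kdiff f M ?P J = (\<Sum>j\<in>?D. sg (a j) (act M (f!j) (\<phi> (insert j J))) +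
        sg (a j) (act M (f!j) (B j)) + sg (a j) (act M (f!j) (Y j)))"
      unfolding kdiff_sg a_def
    proof (rule sum.cong[OF refl])
      fix j assume jD: "j \<in> ?D"
      then have jm: "j < ?m" by auto
      show "sg (card {l \<in> J. l < j}) (act M (f ! j) (?P (insert j J))) =
         sg (card {l \<in> J. l < j}) (act M (f ! j) (\<phi> (insert j J))) +
         sg (card {l \<in> J. l < j}) (act M (f ! j) (B j)) + sg (card {l \<in> J. l < j}) (act M (f ! j) (Y j))"
        by (simp add: Pins[OF jD] act_addR[OF gm] fj[OF jm] AC BC YC add_carr[OF gm] sg_plus add.assoc)
    qed
    have T2: "(\<Sum>j\<in>?D. sg (a j) (act M (f!j) (B j))) = (\<Sum>j\<in>?D. sg (card J) (act M (c j * f!j) u))"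
    proof (rule sum.cong[OF refl])
      fix j assume jD: "j \<in> ?D"
      then have jm: "j < ?m" and jJ: "j \<notin> J" by auto
      have com: "act M (f!j) (act M (c j) u) = act M (c j * f!j) u"
        using act_comm[OF gm fj[OF jm] cp uC] act_mult[OF gm cp fj[OF jm] uC] by simp
      have "sg (a j) (act M (f!j) (B j)) = sg (a j) (sg (card {k\<in>J. j<k}) (act M (f!j) (act M (c j) u)))"
        unfolding B_def by (simp add: act_sgR[OF gm] fj[OF jm] act_carr[OF gm] cp uC)
      also have "\<dots> = sg (a j + card {k\<in>J. j<k}) (act M (c j * f!j) u)"
        by (simp add: sg_add com)
      also have "a j + card {k\<in>J. j<k} = card J" unfolding a_def using card_split[OF fin jJ] .
      finally show "sg (a j) (act M (f!j) (B j)) = sg (card J) (act M (c j * f!j) u)" .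
    qed
    have T3: "(\<Sum>j\<in>?D. sg (a j) (act M (f!j) (Y j))) = (\<Sum>l\<in>J. sg (card J) (act M (c l * f!l) u))"
    proof -
      have "(\<Sum>j\<in>?D. sg (a j) (act M (f!j) (Y j))) = (\<Sum>j\<in>?D. \<Sum>l\<in>J.
          sg (card {k\<in>J. l<k}) (act M (c l) (sg (card {x\<in>J-{l}. x<j}) (act M (f!j) (W j l)))))"
      proof (rule sum.cong[OF refl])
        fix j assume jD: "j \<in> ?D"
        then have jm: "j < ?m" and jJ: "j \<notin> J" by auto
        have "sg (a j) (act M (f!j) (Y j)) = (\<Sum>l\<in>J. sg (a j) (act M (f!j)
             (sg (card {k\<in>insert j J. l<k}) (act M (c l) (W j l)))))"
          unfolding Y_def
          by (simp add: act_sumR[OF gm] fj[OF jm] sg_carr[OF gm] act_carr[OF gm] cp WC sg_sum)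
        also have "\<dots> = (\<Sum>l\<in>J. sg (card {k\<in>J. l<k}) (act M (c l) (sg (card {x\<in>J-{l}. x<j}) (act M (f!j) (W j l)))))"
        proof (rule sum.cong[OF refl])
          fix l assume lJ: "l \<in> J"
          have lj: "l \<noteq> j" using lJ jJ by auto
          have c1: "a j = card {x\<in>J-{l}. x<j} + (if l < j then 1 else 0)"
            unfolding a_def by (rule card_less_remove[OF fin lJ lj])
          have c2: "card {k\<in>insert j J. l<k} = card {k\<in>J. l<k} + (if l < j then 1 else 0)"
            by (rule card_greater_insert[OF fin jJ])
          have ev: "even (a j + card {k\<in>insert j J. l<k} + (card {k\<in>J. l<k} + card {x\<in>J-{l}. x<j}))"
            using c1 c2 by auto
          have com: "act M (f!j) (act M (c l) (W j l)) = act M (c l) (act M (f!j) (W j l))"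
            by (rule act_comm[OF gm fj[OF jm] cp WC])
          have "sg (a j) (act M (f!j) (sg (card {k\<in>insert j J. l<k}) (act M (c l) (W j l)))) =
              sg (a j + card {k\<in>insert j J. l<k}) (act M (c l) (act M (f!j) (W j l)))"
            by (simp add: sg_add act_sgR[OF gm] fj[OF jm] act_carr[OF gm] cp WC com)
          also have "\<dots> = sg (card {k\<in>J. l<k} + card {x\<in>J-{l}. x<j}) (act M (c l) (act M (f!j) (W j l)))"
            by (rule sg_parity[OF ev])
          also have "\<dots> = sg (card {k\<in>J. l<k}) (act M (c l) (sg (card {x\<in>J-{l}. x<j}) (act M (f!j) (W j l))))"
            by (simp add: sg_add act_sgR[OF gm] cp act_carr[OF gm] fj[OF jm] WC)
          finally show "sg (a j) (act M (f!j) (sg (card {k\<in>insert j J. l<k}) (act M (c l) (W j l)))) =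
              sg (card {k\<in>J. l<k}) (act M (c l) (sg (card {x\<in>J-{l}. x<j}) (act M (f!j) (W j l))))" .
        qed
        finally show "sg (a j) (act M (f!j) (Y j)) = (\<Sum>l\<in>J. sg (card {k\<in>J. l<k})
            (act M (c l) (sg (card {x\<in>J-{l}. x<j}) (act M (f!j) (W j l)))))" .
      qed
      also have "\<dots> = (\<Sum>l\<in>J. \<Sum>j\<in>?D.
          sg (card {k\<in>J. l<k}) (act M (c l) (sg (card {x\<in>J-{l}. x<j}) (act M (f!j) (W j l)))))"
        by (rule sum.swap)
      also have "\<dots> = (\<Sum>l\<in>J. sg (card J) (act M (c l * f!l) u))"
      proof (rule sum.cong[OF refl])
        fix l assume lJ: "l \<in> J"
        have lm: "l < ?m" using True lJ by auto
        have Wl: "\<And>j. \<phi> (insert j (insert ?m (J - {l}))) = W j l" by (simp add: W_def insert_commute)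
        have cyc2: "sg (card {x\<in>J-{l}. x<l}) (act M (f!l) u) +
            (\<Sum>j\<in>?D. sg (card {x\<in>J-{l}. x<j}) (act M (f!j) (W j l))) = 0"
          using cyc_at2[OF True lJ] unfolding u_def[symmetric] Wl .
        have S: "(\<Sum>j\<in>?D. sg (card {x\<in>J-{l}. x<j}) (act M (f!j) (W j l))) =
            - sg (card {x\<in>J-{l}. x<l}) (act M (f!l) u)"
          using cyc2 by (simp add: eq_neg_iff_add_eq_0 add.commute)
        obtain k where k: "card J = Suc k" using card_gt_0_iff[of J] lJ fin gr0_conv_Suc by auto
        have cs: "card {k\<in>J. l<k} + card {x\<in>J-{l}. x<l} = k"
        proof -
          have e1: "{k\<in>J. l<k} = {k\<in>J-{l}. l<k}" by auto
          have "card {x\<in>J-{l}. x<l} + card {k\<in>J-{l}. l<k} = card (J - {l})"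
            using card_split[of "J-{l}" l] fin by simp
          then show ?thesis using e1 lJ fin k by (simp add: card_Diff_singleton add.commute)
        qed
        have "(\<Sum>j\<in>?D. sg (card {k\<in>J. l<k}) (act M (c l) (sg (card {x\<in>J-{l}. x<j}) (act M (f!j) (W j l))))) =
            sg (card {k\<in>J. l<k}) (act M (c l) (\<Sum>j\<in>?D. sg (card {x\<in>J-{l}. x<j}) (act M (f!j) (W j l))))"
        proof -
          have C: "\<And>j. j \<in> ?D \<Longrightarrow> sg (card {x\<in>J-{l}. x<j}) (act M (f!j) (W j l)) \<in> carr M"
            by (auto intro!: sg_carr[OF gm] act_carr[OF gm] fj WC)
          have "act M (c l) (\<Sum>j\<in>?D. sg (card {x\<in>J-{l}. x<j}) (act M (f!j) (W j l))) =
              (\<Sum>j\<in>?D. act M (c l) (sg (card {x\<in>J-{l}. x<j}) (act M (f!j) (W j l))))"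
            by (rule act_sumR[OF gm cp C])
          then show ?thesis by (simp add: sg_sum)
        qed
        also have "\<dots> = sg (card {k\<in>J. l<k}) (act M (c l) (- sg (card {x\<in>J-{l}. x<l}) (act M (f!l) u)))"
          by (simp only: S)
        also have "\<dots> = - sg (card {k\<in>J. l<k} + card {x\<in>J-{l}. x<l}) (act M (c l) (act M (f!l) u))"
          by (simp add: sg_add sg_neg act_negR[OF gm] act_sgR[OF gm] cp fj lm uC act_carr[OF gm] sg_carr[OF gm])
        also have "\<dots> = - sg k (act M (c l) (act M (f!l) u))"
          by (simp only: cs)
        also have "\<dots> = sg (card J) (act M (c l) (act M (f!l) u))"
          by (simp only: k sg_Suc)
        also have "\<dots> = sg (card J) (act M (c l * f!l) u)"
          by (simp add: act_mult[OF gm] cp fj lm uC)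
        finally show "(\<Sum>j\<in>?D. sg (card {k\<in>J. l<k}) (act M (c l) (sg (card {x\<in>J-{l}. x<j}) (act M (f!j) (W j l))))) =
            sg (card J) (act M (c l * f!l) u)" .
      qed
      finally show ?thesis .
    qed
    have T23: "(\<Sum>j\<in>?D. sg (card J) (act M (c j * f!j) u)) + (\<Sum>l\<in>J. sg (card J) (act M (c l * f!l) u)) =
        sg (card J) (act M h u)"
    proof -
      have un: "?D \<union> J = {..<?m}" using True by auto
      have "(\<Sum>j\<in>?D. sg (card J) (act M (c j * f!j) u)) + (\<Sum>l\<in>J. sg (card J) (act M (c l * f!l) u)) =
          (\<Sum>l\<in>?D \<union> J. sg (card J) (act M (c l * f!l) u))"
        by (rule sum.union_disjoint[symmetric]) (use fin in auto)
      also have "\<dots> = (\<Sum>l<?m. sg (card J) (act M (c l * f!l) u))" by (simp only: un)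
      also have "\<dots> = sg (card J) (act M h u)"
      proof -
        have C: "\<And>l. l \<in> {..<?m} \<Longrightarrow> c l * f!l \<in> polys_in n" by (auto intro!: polys_mult cp fj)
        have "act M (\<Sum>l<?m. c l * f!l) u = (\<Sum>l<?m. act M (c l * f!l) u)"
          by (rule act_sumL[OF gm C uC])
        then show ?thesis unfolding hdef by (simp add: sg_sum)
      qed
      finally show ?thesis .
    qed
    have "kdiff f M ?P J = (\<Sum>j\<in>?D. sg (a j) (act M (f!j) (\<phi> (insert j J)))) +
        (\<Sum>j\<in>?D. sg (a j) (act M (f!j) (B j))) + (\<Sum>j\<in>?D. sg (a j) (act M (f!j) (Y j)))"
      unfolding step1 by (simp add: sum.distrib)
    also have "\<dots> = (\<Sum>j\<in>?D. sg (a j) (act M (f!j) (\<phi> (insert j J)))) + sg (card J) (act M h u)"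
      unfolding T2 T3 using T23 by (simp add: add.assoc)
    also have "\<dots> = 0" using cyc_at[OF True] unfolding a_def u_def by (simp add: add.commute)
    finally show ?thesis by (simp add: zero_fun_def)
  qed
qed

end

lemma in_ideal_mono:
  assumes "in_ideal n A p" "A \<subseteq> B" "finite B"
  shows "in_ideal n B p"
proof -
  obtain c where c: "\<forall>q\<in>A. c q \<in> polys_in n" "p = (\<Sum>q\<in>A. c q * q)"
    using assms(1) unfolding in_ideal_def by blast
  define c' where "c' q = (if q \<in> A then c q else 0)" for q
  have "(\<Sum>q\<in>B. c' q * q) = (\<Sum>q\<in>A. c q * q)"
    by (rule sum.mono_neutral_cong_right) (use assms(2,3) in \<open>auto simp: c'_def\<close>)
  moreover have "\<forall>q\<in>B. c' q \<in> polys_in n" using c(1) by (auto simp: c'_def polys_zero)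
  ultimately show ?thesis unfolding in_ideal_def using c(2) by auto
qed

lemma step:
  fixes M :: "('k::field mpoly, 'm::ab_group_add) gmod"
  assumes gm: "graded_module n M" and fpol: "\<forall>p\<in>set f. p \<in> polys_in n"
    and hid: "in_ideal n (set f) h"
  shows "reg n (cycles f M i) \<le> reg n (cycles (f@[h]) M i)"
proof -
  obtain c where cpol: "\<forall>l. c l \<in> polys_in n" and hdef: "h = (\<Sum>l<length f. c l * f!l)"
    using ideal_index[OF hid] by blast
  have cp: "\<And>l. c l \<in> polys_in n" using cpol by blast
  let ?m = "length f"
  have fj: "\<And>j. j < ?m \<Longrightarrow> f!j \<in> polys_in n" using fpol by simp
  have hpol: "h \<in> polys_in n" unfolding hdef by (intro polys_sum polys_mult) (auto simp: cp fj)
  define V where "V = {\<phi> :: nat set \<Rightarrow> 'm. \<forall>J. \<phi> J \<in> carr M}"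
  define pr where "pr = prj M ?m c"
  have kd_ext: "kdiff (f@[h]) M \<phi> = kdiff f M \<phi>" if "\<phi> \<in> kcarr f M i" for \<phi>
  proof
    fix J
    have z: "\<And>j. \<not> insert j J \<subseteq> {..<?m} \<Longrightarrow> \<phi> (insert j J) = 0"
      using that unfolding kcarr_def by auto
    show "kdiff (f@[h]) M \<phi> J = kdiff f M \<phi> J"
      unfolding kdiff_sg
    proof (rule sum.mono_neutral_cong_right)
      show "finite ({..<length (f@[h])} - J)" by simp
      show "{..<length f} - J \<subseteq> {..<length (f@[h])} - J" by auto
      show "\<forall>j\<in>({..<length (f@[h])} - J) - ({..<length f} - J).
          sg (card {l\<in>J. l<j}) (act M ((f@[h])!j) (\<phi> (insert j J))) = 0"
      proof
        fix j assume "j \<in> ({..<length (f@[h])} - J) - ({..<length f} - J)"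
        then have "j = ?m" by auto
        then show "sg (card {l\<in>J. l<j}) (act M ((f@[h])!j) (\<phi> (insert j J))) = 0"
          using z[of j] act_zeroR[OF gm hpol] by simp
      qed
      show "\<And>j. j \<in> {..<length f} - J \<Longrightarrow>
          sg (card {l\<in>J. l<j}) (act M ((f@[h])!j) (\<phi> (insert j J))) =
          sg (card {l\<in>J. l<j}) (act M (f!j) (\<phi> (insert j J)))"
        by (simp add: nth_append)
    qed
  qed
  have kcarr_sub: "kcarr f M i \<subseteq> kcarr (f@[h]) M i"
  proof
    fix \<phi> assume "\<phi> \<in> kcarr f M i"
    moreover have "{..<length f} \<subseteq> {..<length (f@[h])}" by auto
    ultimately show "\<phi> \<in> kcarr (f@[h]) M i" unfolding kcarr_def mem_Collect_eq
      by (meson subset_trans)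
  qed
  have tz: "\<And>a j. tor_nz n (cycles f M i) a j \<Longrightarrow> tor_nz n (cycles (f@[h]) M i) a j"
  proof (rule tor_transfer[where V = V and pr = pr])
    show "carr (cycles f M i) \<subseteq> carr (cycles (f@[h]) M i)"
      unfolding cycles_def using kcarr_sub kd_ext by auto
  next
    fix d
    show "comp (cycles f M i) d \<subseteq> comp (cycles (f@[h]) M i) d"
    proof
      fix \<phi> assume "\<phi> \<in> comp (cycles f M i) d"
      then have ph: "\<phi> \<in> kcarr f M i" "\<And>J. \<phi> J \<in> comp M (d - wdeg f J)" "kdiff f M \<phi> = 0"
        unfolding cycles_def kcomp_def by auto
      have c0: "\<And>e. 0 \<in> comp M e" using gm unfolding graded_module_def subgrp_def by blast
      have "\<phi> J \<in> comp M (d - wdeg (f@[h]) J)" for J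
      proof (cases "\<phi> J = 0")
        case True then show ?thesis using c0 by simp
      next
        case False
        then have "J \<subseteq> {..<?m}" using ph(1) unfolding kcarr_def by auto
        then have "wdeg (f@[h]) J = wdeg f J" unfolding wdeg_def
          by (intro arg_cong[where f = int] sum.cong) (auto simp: nth_append)
        then show ?thesis using ph(2) by simp
      qed
      then show "\<phi> \<in> comp (cycles (f@[h]) M i) d"
        unfolding cycles_def kcomp_def using ph kcarr_sub kd_ext by auto
    qed
  next
    show "act (cycles (f@[h]) M i) = act (cycles f M i)" by (simp add: cycles_def)
  next
    show "carr (cycles (f@[h]) M i) \<subseteq> V" unfolding cycles_def kcarr_def V_def by auto
  next
    show "0 \<in> V" unfolding V_def by (simp add: zero_carr[OF gm])
  next
    fix u v assume "u \<in> V" "v \<in> V"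
    then show "u + v \<in> V" unfolding V_def by (simp add: add_carr[OF gm])
  next
    fix u assume "u \<in> V"
    then show "- u \<in> V" unfolding V_def by (simp add: neg_carr[OF gm])
  next
    fix k u assume "k < n" "u \<in> V"
    then show "act (cycles f M i) (var k) u \<in> V"
      unfolding V_def cycles_def kact_def by (simp add: act_carr[OF gm] polys_var)
  next
    fix u v assume uv: "u \<in> V" "v \<in> V"
    show "pr (u + v) = pr u + pr v"
    proof
      fix J
      have uC: "\<And>J. u J \<in> carr M" and vC: "\<And>J. v J \<in> carr M" using uv unfolding V_def by auto
      show "pr (u + v) J = (pr u + pr v) J"
        unfolding pr_def prj_def
        by (simp add: act_addR[OF gm cp uC vC] sg_plus sum.distrib)
    qed
  next
    fix u assume u: "u \<in> V"
    show "pr (- u) = - pr u"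
    proof
      fix J
      have uC: "\<And>J. u J \<in> carr M" using u unfolding V_def by auto
      show "pr (- u) J = (- pr u) J"
        unfolding pr_def prj_def
        by (simp add: act_negR[OF gm cp uC] sg_neg sum_negf)
    qed
  next
    fix k u assume k: "k < n" and u: "u \<in> V"
    have uC: "\<And>J. u J \<in> carr M" using u unfolding V_def by auto
    have vk: "(var k :: 'k mpoly) \<in> polys_in n" using k by (rule polys_var)
    show "pr (act (cycles f M i) (var k) u) = act (cycles f M i) (var k) (pr u)"
    proof
      fix J
      show "pr (act (cycles f M i) (var k) u) J = act (cycles f M i) (var k) (pr u) J"
      proof (cases "J \<subseteq> {..<?m}")
        case False
        then show ?thesis unfolding pr_def prj_def cycles_def kact_def by (simp add: act_zeroR[OF gm vk])
      next
        case True
        have C: "\<And>l. l \<in> J \<Longrightarrow> sg (card {k\<in>J. l<k}) (act M (c l) (u (insert ?m (J - {l})))) \<in> carr M"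
          by (intro sg_carr[OF gm] act_carr[OF gm cp uC])
        have "act M (var k) (\<Sum>l\<in>J. sg (card {k\<in>J. l<k}) (act M (c l) (u (insert ?m (J - {l}))))) =
            (\<Sum>l\<in>J. act M (var k) (sg (card {k\<in>J. l<k}) (act M (c l) (u (insert ?m (J - {l}))))))"
          by (rule act_sumR[OF gm vk C])
        moreover have "\<And>l. act M (var k) (sg (card {k\<in>J. l<k}) (act M (c l) (u (insert ?m (J - {l}))))) =
            sg (card {k\<in>J. l<k}) (act M (c l) (act M (var k) (u (insert ?m (J - {l})))))"
          by (simp add: act_sgR[OF gm vk] act_carr[OF gm cp uC] act_comm[OF gm vk cp uC])
        moreover have "act M (var k) (u J + (\<Sum>l\<in>J. sg (card {k\<in>J. l<k}) (act M (c l) (u (insert ?m (J - {l})))))) =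
            act M (var k) (u J) + act M (var k) (\<Sum>l\<in>J. sg (card {k\<in>J. l<k}) (act M (c l) (u (insert ?m (J - {l})))))"
          by (rule act_addR[OF gm vk uC sum_carr[OF gm C]])
        ultimately show ?thesis using True unfolding pr_def prj_def cycles_def kact_def by simp
      qed
    qed
  next
    fix u assume u: "u \<in> carr (cycles (f@[h]) M i)"
    then have uk: "u \<in> kcarr (f@[h]) M i" and ucyc: "kdiff (f@[h]) M u = 0" unfolding cycles_def by auto
    have uC: "\<forall>J. u J \<in> carr M" using uk unfolding kcarr_def by auto
    have usupp: "\<And>J. u J \<noteq> 0 \<Longrightarrow> J \<subseteq> {..<Suc ?m} \<and> card J = i" using uk unfolding kcarr_def by auto
    have valC: "pr u J \<in> carr M" for J unfolding pr_def prj_def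
        using uC by (auto intro!: add_carr[OF gm] sum_carr[OF gm] sg_carr[OF gm] act_carr[OF gm] cp zero_carr[OF gm])
    have supp: "J \<subseteq> {..<length f} \<and> card J = i" if nz: "pr u J \<noteq> 0" for J
    proof -
      have J: "J \<subseteq> {..<?m}" using nz unfolding pr_def prj_def by (auto split: if_splits)
      have fin: "finite J" using J finite_subset by blast
      have "card J = i"
      proof (rule ccontr)
        assume ci: "card J \<noteq> i"
        have "u J = 0" using usupp ci by blast
        moreover have "u (insert ?m (J - {l})) = 0" if "l \<in> J" for l
        proof -
          have "?m \<notin> J - {l}" using J by auto
          then have "card (insert ?m (J - {l})) = card J" using fin that
            by (simp add: card_Diff_singleton) (metis card_gt_0_iff empty_iff Suc_pred)
          then show ?thesis using usupp ci by metis
        qed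
        ultimately have "pr u J = 0" unfolding pr_def prj_def using J
          by (simp add: act_zeroR[OF gm cp])
        then show False using nz by simp
      qed
      then show "J \<subseteq> {..<length f} \<and> card J = i" using J by simp
    qed
    have "pr u \<in> kcarr f M i" unfolding kcarr_def using valC supp by blast
    moreover have "kdiff f M (pr u) = 0"
      unfolding pr_def by (rule prj_cycle[OF gm fpol cpol hdef uC ucyc])
    ultimately show "pr u \<in> carr (cycles f M i)" unfolding cycles_def by simp
  next
    fix u assume u: "u \<in> carr (cycles f M i)"
    then have uk: "u \<in> kcarr f M i" unfolding cycles_def by auto
    have usupp: "\<And>J. \<not> J \<subseteq> {..<?m} \<Longrightarrow> u J = 0" using uk unfolding kcarr_def by auto
    show "pr u = u"
    proof
      fix J
      show "pr u J = u J"
      proof (cases "J \<subseteq> {..<?m}")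
        case True
        have "\<And>l. u (insert ?m (J - {l})) = 0" by (rule usupp) auto
        then show ?thesis using True unfolding pr_def prj_def by (simp add: act_zeroR[OF gm cp])
      next
        case False
        then show ?thesis using usupp unfolding pr_def prj_def by simp
      qed
    qed
  qed
  then show ?thesis by (rule reg_mono)
qed

theorem lemma1p5:
  fixes M :: "('k::field mpoly, 'm::ab_group_add) gmod"
    and f g :: "'k mpoly list" and n i :: nat
  assumes "graded_module n M"
    and "fin_gen n M"
    and "\<forall>p\<in>set f. p \<in> polys_in n \<and> is_homog p"
    and "\<forall>p\<in>set g. p \<in> polys_in n \<and> is_homog p \<and> in_ideal n (set f) p"
  shows "reg n (cycles f M i) \<le> reg n (cycles (f @ g) M i)"
  using assms(4)
proof (induction g rule: rev_induct)
  case Nil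
  then show ?case by simp
next
  case (snoc x g)
  have IH: "reg n (cycles f M i) \<le> reg n (cycles (f @ g) M i)" using snoc by simp
  have fg: "\<forall>p\<in>set (f @ g). p \<in> polys_in n" using assms(3) snoc.prems by auto
  have "in_ideal n (set f) x" using snoc.prems by simp
  then have "in_ideal n (set (f @ g)) x" by (rule in_ideal_mono) auto
  then have "reg n (cycles (f @ g) M i) \<le> reg n (cycles ((f @ g) @ [x]) M i)"
    by (rule step[OF assms(1) fg])
  then show ?case using IH by simp
qed

end
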